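(* Let $m\ge2$ be an integer, $0<h\le1$, $E=(\alpha+i\mu)h^{2m/(m+1)}$ with $\alpha,\mu>0$ independent of $h$, $\varphi(x)=\int_0^x(E+m^{-1}y^{2m})^{1/2}dy$ (branch of the square root with positive imaginary part), $u(x)=(\varphi')^{-1/2}e^{i\varphi/h}$, $f=-h^2\big(\tfrac34(\varphi')^{-2}(\varphi'')^2-\tfrac12(\varphi')^{-1}\varphi'''\big)$, $\gamma=h^{1/(m+1)}$, and $\tilde u(x)=\chi(x/\gamma)u(x)$, where $\chi\in C_c^\infty(\mathbb{R})$ with $\chi\equiv1$ on $|s|\le1$ and $\operatorname{supp}\chi\subset[-2,2]$. Let \[ R=f\tilde u+[(hD)^2,\chi(x/\gamma)]u. \] Then \[ \|R\|_{L^2}=\mathcal O(h^{2m/(m+1)})\|\tilde u\|_{L^2}. \]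
   Context: $hD=-ih\,\frac{d}{dx}$, and $[\cdot,\cdot]$ is the commutator, with $\chi(x/\gamma)$ acting as a multiplication operator. The implicit constant is independent of $h$. *)

theory Defs
  imports "HOL-Analysis.Analysis"
begin

definition Dx :: "(real \<Rightarrow> complex) \<Rightarrow> real \<Rightarrow> complex" where
  "Dx g x = vector_derivative g (at x)"

definition hD :: "real \<Rightarrow> (real \<Rightarrow> complex) \<Rightarrow> real \<Rightarrow> complex" where
  "hD h g x = - \<i> * complex_of_real h * Dx g x"

definition smooth_real :: "(real \<Rightarrow> real) \<Rightarrow> bool" where
  "smooth_real c \<longleftrightarrow> (\<exists>ds :: nat \<Rightarrow> real \<Rightarrow> real. ds 0 = c \<and>
      (\<forall>k x. (ds k has_real_derivative ds (Suc k) x) (at x)))"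

definition cutoff :: "(real \<Rightarrow> real) \<Rightarrow> bool" where
  "cutoff c \<longleftrightarrow> smooth_real c \<and> (\<forall>s. \<bar>s\<bar> \<le> 1 \<longrightarrow> c s = 1)
      \<and> closure {s. c s \<noteq> 0} \<subseteq> {-2..2}"

definition Een :: "nat \<Rightarrow> real \<Rightarrow> real \<Rightarrow> real \<Rightarrow> complex" where
  "Een m \<alpha> \<mu> h = Complex \<alpha> \<mu> * complex_of_real (h powr (2 * real m / (real m + 1)))"

text \<open>Integrand (E + y^(2m)/m)^(1/2), branch with positive imaginary part
  (the principal square root csqrt, since the argument lies in the open upper half plane).\<close>
definition phi_int :: "nat \<Rightarrow> real \<Rightarrow> real \<Rightarrow> real \<Rightarrow> real \<Rightarrow> complex" where
  "phi_int m \<alpha> \<mu> h y = csqrt (Een m \<alpha> \<mu> h + complex_of_real (y ^ (2*m) / real m))"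

definition phi :: "nat \<Rightarrow> real \<Rightarrow> real \<Rightarrow> real \<Rightarrow> real \<Rightarrow> complex" where
  "phi m \<alpha> \<mu> h x = (if 0 \<le> x then integral {0..x} (phi_int m \<alpha> \<mu> h)
                      else - integral {x..0} (phi_int m \<alpha> \<mu> h))"

definition uu :: "nat \<Rightarrow> real \<Rightarrow> real \<Rightarrow> real \<Rightarrow> real \<Rightarrow> complex" where
  "uu m \<alpha> \<mu> h x = Dx (phi m \<alpha> \<mu> h) x powr (-1/2)
      * exp (\<i> * phi m \<alpha> \<mu> h x / complex_of_real h)"

definition ff :: "nat \<Rightarrow> real \<Rightarrow> real \<Rightarrow> real \<Rightarrow> real \<Rightarrow> complex" where
  "ff m \<alpha> \<mu> h x =
     (let p = phi m \<alpha> \<mu> h;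
          p1 = Dx p x; p2 = Dx (Dx p) x; p3 = Dx (Dx (Dx p)) x
      in - (complex_of_real (h^2) * (3/4 * inverse (p1^2) * p2^2 - 1/2 * inverse p1 * p3)))"

definition gam :: "nat \<Rightarrow> real \<Rightarrow> real" where
  "gam m h = h powr (1 / (real m + 1))"

definition ut :: "(real \<Rightarrow> real) \<Rightarrow> nat \<Rightarrow> real \<Rightarrow> real \<Rightarrow> real \<Rightarrow> real \<Rightarrow> complex" where
  "ut chi m \<alpha> \<mu> h x = complex_of_real (chi (x / gam m h)) * uu m \<alpha> \<mu> h x"

definition comm :: "(real \<Rightarrow> real) \<Rightarrow> nat \<Rightarrow> real \<Rightarrow> real \<Rightarrow> real \<Rightarrow> real \<Rightarrow> complex" where
  "comm chi m \<alpha> \<mu> h x =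
     hD h (hD h (ut chi m \<alpha> \<mu> h)) x
     - complex_of_real (chi (x / gam m h)) * hD h (hD h (uu m \<alpha> \<mu> h)) x"

definition RR :: "(real \<Rightarrow> real) \<Rightarrow> nat \<Rightarrow> real \<Rightarrow> real \<Rightarrow> real \<Rightarrow> real \<Rightarrow> complex" where
  "RR chi m \<alpha> \<mu> h x = ff m \<alpha> \<mu> h x * ut chi m \<alpha> \<mu> h x + comm chi m \<alpha> \<mu> h x"

definition L2norm :: "(real \<Rightarrow> complex) \<Rightarrow> real" where
  "L2norm g = sqrt (\<integral>x. (cmod (g x))^2 \<partial>lborel)"

end

theory Submission
  imports Defs
begin


lemma ds_zero:
  assumes "\<forall>k x. (ds k has_real_derivative ds (Suc k) x) (at x)" "ds 0 = chi"
    and "closure {s. chi s \<noteq> 0} \<subseteq> {-2..2}"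
  shows "\<bar>s\<bar> > 2 \<Longrightarrow> ds k s = (0::real)"
proof (induction k arbitrary: s)
  case 0
  have "s \<notin> {-2..2}" using 0 by (auto simp: abs_if split: if_splits)
  moreover have "{s. chi s \<noteq> 0} \<subseteq> {-2..2}" using order_trans[OF closure_subset assms(3)] .
  ultimately have "s \<notin> {s. chi s \<noteq> 0}" by blast
  then show ?case using assms(2) by simp
next
  case (Suc k)
  let ?S = "{s::real. \<bar>s\<bar> > 2}"
  have op: "open ?S" by (rule open_Collect_less) (auto intro!: continuous_intros)
  have "((\<lambda>_. 0) has_real_derivative 0) (at s)" by simp
  then have "(ds k has_real_derivative 0) (at s)"
  proof (rule has_field_derivative_transform_within_open[OF _ op])
    show "s \<in> ?S" using Suc.prems by simp
    fix y assume "y \<in> ?S"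
    then show "0 = ds k y" using Suc.IH[of y] by simp
  qed
  with assms(1) show ?case using DERIV_unique by blast
qed

lemma ds_bound:
  assumes "\<forall>k x. (ds k has_real_derivative ds (Suc k) x) (at x)" "ds 0 = chi"
    and "closure {s. chi s \<noteq> 0} \<subseteq> {-2..2}"
  shows "\<exists>B. \<forall>s. \<bar>ds k s\<bar> \<le> (B::real)"
proof -
  have "continuous_on {-2..2} (\<lambda>s. \<bar>ds k s\<bar>)"
  proof -
    have "continuous_on {-2..2} (ds k)"
      by (rule continuous_at_imp_continuous_on) (meson DERIV_isCont assms(1))
    then show ?thesis by (rule continuous_on_rabs)
  qed
  then obtain y where "y \<in> {-2..2}" "\<forall>s\<in>{-2..2}. \<bar>ds k s\<bar> \<le> \<bar>ds k y\<bar>"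
    using continuous_attains_sup[of "{-2..2::real}" "\<lambda>s. \<bar>ds k s\<bar>"] by auto
  then have "\<bar>ds k s\<bar> \<le> \<bar>ds k y\<bar>" for s
  proof (cases "\<bar>s\<bar> > 2")
    case True then show ?thesis using ds_zero[OF assms, of s k] by simp
  next
    case False
    then have "s \<in> {-2..2}" by (auto simp: abs_if split: if_splits)
    then show ?thesis using \<open>\<forall>s\<in>{-2..2}. \<bar>ds k s\<bar> \<le> \<bar>ds k y\<bar>\<close> by blast
  qed
  then show ?thesis by blast
qed

lemma ds_bound3:
  assumes "\<forall>k x. (ds k has_real_derivative ds (Suc k) x) (at x)" "ds 0 = chi"
    and "closure {s. chi s \<noteq> 0} \<subseteq> {-2..2}"
  shows "\<exists>B>0. \<forall>s. \<bar>ds 0 s\<bar> \<le> (B::real) \<and> \<bar>ds 1 s\<bar> \<le> B \<and> \<bar>ds 2 s\<bar> \<le> B"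
proof -
  obtain B0 B1 B2 where b: "\<And>s. \<bar>ds 0 s\<bar> \<le> B0" "\<And>s. \<bar>ds 1 s\<bar> \<le> B1" "\<And>s. \<bar>ds 2 s\<bar> \<le> B2"
    using ds_bound[OF assms] by metis
  have "B0 \<ge> 0" "B1 \<ge> 0" "B2 \<ge> 0" using b(1)[of 0] b(2)[of 0] b(3)[of 0] by linarith+
  then show ?thesis using b
  proof (intro exI[of _ "B0+B1+B2+1"] conjI allI)
    fix s
    show "B0+B1+B2+1 > 0" using \<open>B0 \<ge> 0\<close> \<open>B1 \<ge> 0\<close> \<open>B2 \<ge> 0\<close> by linarith
    show "\<bar>ds 0 s\<bar> \<le> B0+B1+B2+1" using b(1)[of s] \<open>B1 \<ge> 0\<close> \<open>B2 \<ge> 0\<close> by linarith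
    show "\<bar>ds 1 s\<bar> \<le> B0+B1+B2+1" using b(2)[of s] \<open>B0 \<ge> 0\<close> \<open>B2 \<ge> 0\<close> by linarith
    show "\<bar>ds 2 s\<bar> \<le> B0+B1+B2+1" using b(3)[of s] \<open>B1 \<ge> 0\<close> \<open>B0 \<ge> 0\<close> by linarith
  qed
qed



lemma Im_Een: "Im (Een m \<alpha> \<mu> h) = \<mu> * h powr (2 * real m / (real m + 1))"
  by (simp add: Een_def)

lemma vd_inverse:
  fixes f :: "real \<Rightarrow> complex"
  assumes "(f has_vector_derivative f') (at x)" "f x \<noteq> 0"
  shows "((\<lambda>y. inverse (f y)) has_vector_derivative - f' / (f x)^2) (at x)"
proof -
  have "((inverse \<circ> f) has_vector_derivative f' * (- (inverse (f x) ^ Suc (Suc 0))))  (at x)"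
    by (rule field_vector_diff_chain_at[OF assms(1) DERIV_inverse[OF assms(2)]])
  then show ?thesis by (simp add: o_def field_simps power2_eq_square)
qed

lemma hD2:
  assumes "\<And>y. (F has_vector_derivative F1 y) (at y)" "(F1 has_vector_derivative D) (at x)"
  shows "hD h (hD h F) x = - complex_of_real (h^2) * D"
proof -
  have "Dx F = F1" by (rule ext) (simp add: Dx_def vector_derivative_at[OF assms(1)])
  then have "hD h F = (\<lambda>y. (- \<i> * complex_of_real h) * F1 y)" by (simp add: hD_def[abs_def])
  moreover have "((\<lambda>y. (- \<i> * complex_of_real h) * F1 y) has_vector_derivative (- \<i> * complex_of_real h) * D) (at x)"
    by (rule has_vector_derivative_mult_right[OF assms(2)])
  ultimately have "Dx (hD h F) x = (- \<i> * complex_of_real h) * D"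
    by (simp add: Dx_def vector_derivative_at)
  then show ?thesis by (simp add: hD_def power2_eq_square algebra_simps)
qed

lemma ds_deriv:
  assumes "\<forall>k x. (ds k has_real_derivative ds (Suc k) x) (at x)" "g \<noteq> 0"
  shows "((\<lambda>x. complex_of_real (ds k (x/g))) has_vector_derivative complex_of_real (ds (Suc k) (x/g) / g)) (at x)"
proof -
  have "((\<lambda>x. ds k (x/g)) has_real_derivative ds (Suc k) (x/g) * (1/g)) (at x)"
    by (rule DERIV_chain2[OF assms(1)[rule_format]]) (use assms(2) in \<open>auto intro!: derivative_eq_intros\<close>)
  then have "((\<lambda>x. ds k (x/g)) has_real_derivative ds (Suc k) (x/g) / g) (at x)" by simp
  from has_vector_derivative_of_real[OF this] show ?thesis .
qed

context fixes m::nat and \<alpha> \<mu> h :: real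
  assumes m2: "m \<ge> 2" and ap: "\<alpha> > 0" and mp: "\<mu> > 0" and hp: "h > 0"
begin

definition "qq x = Een m \<alpha> \<mu> h + complex_of_real (x ^ (2*m) / real m)"

lemma phi_int_qq: "phi_int m \<alpha> \<mu> h x = csqrt (qq x)"
  by (simp add: phi_int_def qq_def)

lemma Im_qq: "Im (qq x) > 0"
  using mp hp by (simp add: qq_def Im_Een)

lemma qq_nonpos: "qq x \<notin> \<real>\<^sub>\<le>\<^sub>0"
  using Im_qq[of x] by (auto simp: complex_nonpos_Reals_iff)

lemma p_sq: "(phi_int m \<alpha> \<mu> h x)^2 = qq x"
  by (simp add: phi_int_qq)

lemma Im_p: "Im (phi_int m \<alpha> \<mu> h x) \<noteq> 0"
proof
  assume "Im (phi_int m \<alpha> \<mu> h x) = 0"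
  then have "Im ((phi_int m \<alpha> \<mu> h x)^2) = 0" by (simp add: power2_eq_square)
  with Im_qq[of x] show False by (simp add: p_sq)
qed

lemma p_nz: "phi_int m \<alpha> \<mu> h x \<noteq> 0"
  using Im_p[of x] by auto

lemma p_nonpos: "phi_int m \<alpha> \<mu> h x \<notin> \<real>\<^sub>\<le>\<^sub>0"
  using Im_p[of x] by (auto simp: complex_nonpos_Reals_iff)

lemma qq_deriv: "(qq has_vector_derivative complex_of_real (2 * x^(2*m-1))) (at x)"
proof -
  have "((\<lambda>x. x ^ (2*m) / real m) has_real_derivative (real (2*m) * x^(2*m-1)/ real m)) (at x)"
    by (auto intro!: derivative_eq_intros)
  moreover have "real (2*m) * x^(2*m-1)/ real m = 2 * x^(2*m-1)" using m2 by simp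
  ultimately have "((\<lambda>x. x ^ (2*m) / real m) has_real_derivative (2 * x^(2*m-1))) (at x)" by simp
  from has_vector_derivative_of_real[OF this]
  have "((\<lambda>x. complex_of_real (x ^ (2*m) / real m)) has_vector_derivative complex_of_real (2 * x^(2*m-1))) (at x)" .
  then show ?thesis unfolding qq_def
    by (rule has_vector_derivative_eq_rhs[OF has_vector_derivative_add[OF has_vector_derivative_const]]) simp
qed

definition "p1 x = complex_of_real (x^(2*m-1)) / phi_int m \<alpha> \<mu> h x"

lemma p_deriv: "(phi_int m \<alpha> \<mu> h has_vector_derivative p1 x) (at x)"
proof -
  have "((csqrt \<circ> qq) has_vector_derivative (complex_of_real (2 * x^(2*m-1)) * inverse (2 * csqrt (qq x)))) (at x)"
    by (rule field_vector_diff_chain_at[OF qq_deriv has_field_derivative_csqrt[OF qq_nonpos]])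
  moreover have "csqrt \<circ> qq = phi_int m \<alpha> \<mu> h" by (auto simp: phi_int_qq)
  moreover have "complex_of_real (2 * x^(2*m-1)) * inverse (2 * csqrt (qq x)) = p1 x"
    by (simp add: p1_def phi_int_qq field_simps)
  ultimately show ?thesis by simp
qed

lemma p_cont: "continuous_on S (phi_int m \<alpha> \<mu> h)"
  by (rule continuous_at_imp_continuous_on) (meson has_vector_derivative_continuous p_deriv)

lemma phi_deriv: "(phi m \<alpha> \<mu> h has_vector_derivative phi_int m \<alpha> \<mu> h x) (at x)"
proof -
  define a where "a = - (\<bar>x\<bar> + 1)"
  define b where "b = \<bar>x\<bar> + 1"
  let ?P = "phi_int m \<alpha> \<mu> h"
  have ax: "a < x" "x < b" "a < 0" "0 < b" by (auto simp: a_def b_def)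
  have int: "?P integrable_on {c..d}" for c d by (rule integrable_continuous_real[OF p_cont])
  have eq: "phi m \<alpha> \<mu> h y = integral {a..y} ?P - integral {a..0} ?P" if "y \<in> {a<..<b}" for y
  proof (cases "0 \<le> y")
    case True
    have "integral {a..0} ?P + integral {0..y} ?P = integral {a..y} ?P"
      by (rule Henstock_Kurzweil_Integration.integral_combine) (use True ax in \<open>auto intro: int\<close>)
    then show ?thesis using True by (simp add: phi_def algebra_simps)
  next
    case False
    have "integral {a..y} ?P + integral {y..0} ?P = integral {a..0} ?P"
      by (rule Henstock_Kurzweil_Integration.integral_combine) (use False that in \<open>auto intro: int\<close>)
    then show ?thesis using False by (simp add: phi_def algebra_simps)
  qed
  have "((\<lambda>u. integral {a..u} ?P) has_vector_derivative ?P x) (at x within {a..b})"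
    by (rule integral_has_vector_derivative[OF p_cont]) (use ax in auto)
  then have "((\<lambda>u. integral {a..u} ?P) has_vector_derivative ?P x) (at x)"
    using at_within_Icc_at[OF ax(1,2)] by simp
  then have "((\<lambda>u. integral {a..u} ?P - integral {a..0} ?P) has_vector_derivative ?P x) (at x)"
    by (rule has_vector_derivative_eq_rhs[OF has_vector_derivative_diff[OF _ has_vector_derivative_const]]) simp
  then show ?thesis
    by (rule has_vector_derivative_transform_within_open[where S="{a<..<b}"]) (use ax eq in auto)
qed

lemma Dx_phi: "Dx (phi m \<alpha> \<mu> h) = phi_int m \<alpha> \<mu> h"
  by (rule ext) (simp add: Dx_def vector_derivative_at[OF phi_deriv])

lemma Dx_p: "Dx (phi_int m \<alpha> \<mu> h) = p1"
  by (rule ext) (simp add: Dx_def vector_derivative_at[OF p_deriv])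

definition "p2 x = complex_of_real (real (2*m-1) * x^(2*m-2)) / phi_int m \<alpha> \<mu> h x
    - complex_of_real (x^(2*m-1)) * p1 x / (phi_int m \<alpha> \<mu> h x)^2"

lemma p1_deriv: "(p1 has_vector_derivative p2 x) (at x)"
proof -
  have d1: "((\<lambda>x. complex_of_real (x^(2*m-1))) has_vector_derivative complex_of_real (real (2*m-1) * x^(2*m-2))) (at x)"
  proof -
    have "((\<lambda>x. x^(2*m-1)) has_real_derivative (real (2*m-1) * x^(2*m-1-1))) (at x)"
      using DERIV_pow[of "2*m-1" x] by simp
    moreover have "2*m-1-1 = 2*m-2" by simp
    ultimately show ?thesis by (metis has_vector_derivative_of_real)
  qed
  note d2 = vd_inverse[OF p_deriv p_nz]
  have "((\<lambda>y. complex_of_real (y^(2*m-1)) * inverse (phi_int m \<alpha> \<mu> h y)) has_vector_derivative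
      (complex_of_real (x^(2*m-1)) * (- p1 x / (phi_int m \<alpha> \<mu> h x)^2) +
       complex_of_real (real (2*m-1) * x^(2*m-2)) * inverse (phi_int m \<alpha> \<mu> h x))) (at x)"
    by (rule has_vector_derivative_mult[OF d1 d2])
  moreover have "(\<lambda>y. complex_of_real (y^(2*m-1)) * inverse (phi_int m \<alpha> \<mu> h y)) = p1"
    by (rule ext) (simp add: p1_def field_simps)
  moreover have "complex_of_real (x^(2*m-1)) * (- p1 x / (phi_int m \<alpha> \<mu> h x)^2) +
       complex_of_real (real (2*m-1) * x^(2*m-2)) * inverse (phi_int m \<alpha> \<mu> h x) = p2 x"
    by (simp add: p2_def field_simps)
  ultimately show ?thesis by simp
qed

lemma Dx_p1: "Dx p1 = p2"
  by (rule ext) (simp add: Dx_def vector_derivative_at[OF p1_deriv])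

definition "ee x = exp (\<i> * phi m \<alpha> \<mu> h x / complex_of_real h)"
definition "ww x = - p1 x / (2 * phi_int m \<alpha> \<mu> h x) + \<i> * phi_int m \<alpha> \<mu> h x / complex_of_real h"

lemma uu_eq: "uu m \<alpha> \<mu> h x = phi_int m \<alpha> \<mu> h x powr (-1/2) * ee x"
  by (simp add: uu_def Dx_phi ee_def)

lemma uu_fun: "uu m \<alpha> \<mu> h = (\<lambda>x. phi_int m \<alpha> \<mu> h x powr (-1/2) * ee x)"
  by (rule ext) (rule uu_eq)

lemma ee_deriv: "(ee has_vector_derivative (\<i> * phi_int m \<alpha> \<mu> h x / complex_of_real h) * ee x) (at x)"
proof -
  have "((\<lambda>x. \<i> * phi m \<alpha> \<mu> h x / complex_of_real h) has_vector_derivative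
     \<i> * phi_int m \<alpha> \<mu> h x / complex_of_real h) (at x)"
    by (intro has_vector_derivative_divide has_vector_derivative_mult_right phi_deriv)
  from field_vector_diff_chain_at[OF this DERIV_exp]
  show ?thesis unfolding ee_def[abs_def] by (simp add: o_def)
qed

lemma pw_deriv: "((\<lambda>x. phi_int m \<alpha> \<mu> h x powr (-1/2)) has_vector_derivative
     - p1 x / (2 * phi_int m \<alpha> \<mu> h x) * phi_int m \<alpha> \<mu> h x powr (-1/2)) (at x)"
proof -
  let ?P = "phi_int m \<alpha> \<mu> h"
  from field_vector_diff_chain_at[OF p_deriv has_field_derivative_powr[OF p_nonpos, of "-1/2"]]
  have "((\<lambda>x. ?P x powr (-1/2)) has_vector_derivative p1 x * (- 1 / 2 * ?P x powr (- 1 / 2 - 1))) (at x)"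
    by (simp add: o_def)
  moreover have "?P x powr (- 1 / 2 - 1) = ?P x powr (-1/2) / ?P x"
  proof -
    have "?P x powr (-1/2) / ?P x = ?P x powr (-1/2) / ?P x powr 1" by simp
    also have "\<dots> = ?P x powr (-1/2 - 1)" by (rule powr_diff[symmetric])
    finally show ?thesis by simp
  qed
  ultimately show ?thesis by (simp add: field_simps)
qed

lemma uu_deriv: "(uu m \<alpha> \<mu> h has_vector_derivative ww x * uu m \<alpha> \<mu> h x) (at x)"
proof -
  let ?P = "phi_int m \<alpha> \<mu> h"
  have "((\<lambda>x. ?P x powr (-1/2) * ee x) has_vector_derivative
     ?P x powr (-1/2) * ((\<i> * ?P x / complex_of_real h) * ee x) +
     - p1 x / (2 * ?P x) * ?P x powr (-1/2) * ee x) (at x)"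
    by (rule has_vector_derivative_mult[OF pw_deriv ee_deriv])
  then show ?thesis unfolding uu_fun ww_def by (simp add: algebra_simps)
qed

lemma Dx_uu: "Dx (uu m \<alpha> \<mu> h) = (\<lambda>x. ww x * uu m \<alpha> \<mu> h x)"
  by (rule ext) (simp add: Dx_def vector_derivative_at[OF uu_deriv])

lemma ww_deriv: "\<exists>D. (ww has_vector_derivative D) (at x)"
proof -
  let ?P = "phi_int m \<alpha> \<mu> h"
  have "ww = (\<lambda>x. - (p1 x * inverse (?P x)) / 2 + (\<i> / complex_of_real h) * ?P x)"
    by (rule ext) (simp add: ww_def field_simps)
  moreover have "((\<lambda>x. - (p1 x * inverse (?P x)) / 2 + (\<i> / complex_of_real h) * ?P x) has_vector_derivative
     - (p1 x * (- p1 x / (?P x)^2) + p2 x * inverse (?P x)) / 2 + (\<i> / complex_of_real h) * p1 x) (at x)"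
    by (intro has_vector_derivative_add has_vector_derivative_divide has_vector_derivative_minus
        has_vector_derivative_mult has_vector_derivative_mult_right p1_deriv p_deriv vd_inverse p_nz)
  ultimately show ?thesis by auto
qed

lemma u1_deriv: "\<exists>D. ((\<lambda>x. ww x * uu m \<alpha> \<mu> h x) has_vector_derivative D) (at x)"
  using ww_deriv[of x] has_vector_derivative_mult[OF _ uu_deriv] by blast

lemma comm_eq:
  assumes ds: "\<forall>k x. (ds k has_real_derivative ds (Suc k) x) (at x)" "ds 0 = chi"
  shows "comm chi m \<alpha> \<mu> h x = - complex_of_real (h^2) *
     (complex_of_real (ds 2 (x / gam m h) / (gam m h)^2) * uu m \<alpha> \<mu> h x
      + 2 * complex_of_real (ds 1 (x / gam m h) / gam m h) * ww x * uu m \<alpha> \<mu> h x)"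
proof -
  let ?g = "gam m h" and ?u = "uu m \<alpha> \<mu> h"
  have g: "?g \<noteq> 0" using hp by (simp add: gam_def)
  let ?c = "\<lambda>k x. complex_of_real (ds k (x / ?g))"
  have c: "\<And>k y. (?c k has_vector_derivative complex_of_real (ds (Suc k) (y / ?g) / ?g)) (at y)"
    by (rule ds_deriv[OF ds(1) g])
  have c0: "(?c 0 has_vector_derivative complex_of_real (ds 1 (y / ?g) / ?g)) (at y)" for y
    using c[of 0 y] by simp
  have c1: "(?c 1 has_vector_derivative complex_of_real (ds 2 (y / ?g) / ?g)) (at y)" for y
    using c[of 1 y] by (simp add: numeral_2_eq_2)
  obtain D where D: "((\<lambda>x. ww x * ?u x) has_vector_derivative D) (at x)" using u1_deriv by blast
  have ut: "ut chi m \<alpha> \<mu> h = (\<lambda>y. ?c 0 y * ?u y)" by (rule ext) (simp add: ut_def ds(2))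
  have d1: "(ut chi m \<alpha> \<mu> h has_vector_derivative
        (\<lambda>y. ?c 0 y * (ww y * ?u y) + complex_of_real (ds 1 (y / ?g) / ?g) * ?u y) y) (at y)" for y
    unfolding ut using has_vector_derivative_mult[OF c0[of y] uu_deriv[of y]] by simp
  have d2: "((\<lambda>y. ?c 0 y * (ww y * ?u y) + ?c 1 y / ?g * ?u y) has_vector_derivative
      (?c 0 x * D + complex_of_real (ds 1 (x / ?g) / ?g) * (ww x * ?u x)) +
      (?c 1 x / ?g * (ww x * ?u x) + complex_of_real (ds 2 (x / ?g) / ?g) / ?g * ?u x)) (at x)"
    by (intro has_vector_derivative_add has_vector_derivative_mult c0 c1 D uu_deriv has_vector_derivative_divide)
  have d2': "((\<lambda>y. ?c 0 y * (ww y * ?u y) + complex_of_real (ds 1 (y / ?g) / ?g) * ?u y) has_vector_derivative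
      (?c 0 x * D + complex_of_real (ds 1 (x / ?g) / ?g) * (ww x * ?u x)) +
      (?c 1 x / ?g * (ww x * ?u x) + complex_of_real (ds 2 (x / ?g) / ?g) / ?g * ?u x)) (at x)"
    using d2 by simp
  have "comm chi m \<alpha> \<mu> h x = - complex_of_real (h^2) * ((?c 0 x * D + complex_of_real (ds 1 (x / ?g) / ?g) * (ww x * ?u x)) +
      (?c 1 x / ?g * (ww x * ?u x) + complex_of_real (ds 2 (x / ?g) / ?g) / ?g * ?u x))
     - complex_of_real (chi (x / ?g)) * (- complex_of_real (h^2) * D)"
    unfolding comm_def hD2[OF d1 d2'] hD2[OF uu_deriv D] ..
  then show ?thesis using ds(2) by (simp add: algebra_simps power2_eq_square)
qed

lemma frac_bound:
  fixes t g R mu :: real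
  assumes "0 \<le> t" "t \<le> 2*g" "0 < g" "0 < mu" "mu * g^N \<le> R" "n \<le> N"
  shows "t^n / R \<le> 2^n / mu / g^(N-n)"
proof -
  have R: "R > 0" using assms by (smt (verit) mult_pos_pos zero_less_power)
  have "t^n \<le> (2*g)^n" using assms by (intro power_mono) auto
  then have "t^n * g^(N-n) * mu \<le> (2*g)^n * g^(N-n) * mu" using assms by (intro mult_right_mono) auto
  also have "\<dots> = 2^n * (mu * g^N)" using assms(6)
    by (simp add: power_mult_distrib power_add[symmetric] algebra_simps)
  also have "\<dots> \<le> 2^n * R" using assms(5) by (intro mult_left_mono) auto
  finally show ?thesis using R assms(3,4) by (simp add: divide_simps mult.commute mult.left_commute)
qed

lemma gam_pos: "gam m h > 0" using hp by (simp add: gam_def)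

lemma gam_pow: "(gam m h)^n = h powr (real n / (real m + 1))"
proof -
  have "(gam m h)^n = gam m h powr real n" using gam_pos by (simp add: powr_realpow)
  also have "\<dots> = h powr (real n / (real m + 1))" by (simp add: gam_def powr_powr)
  finally show ?thesis .
qed

lemma gam_2m: "(gam m h)^(2*m) = h powr (2 * real m / (real m + 1))"
  by (simp add: gam_pow)

lemma gam_h: "(gam m h)^(m+1) = h"
proof -
  have "(gam m h)^(m+1) = h powr (real (m+1) / (real m + 1))" by (rule gam_pow)
  also have "real (m+1) / (real m + 1) = 1" by simp
  finally show ?thesis using hp by simp
qed

definition "KK = \<alpha> + \<mu> + 4^m / real m"

lemma r2: "(cmod (phi_int m \<alpha> \<mu> h x))^2 = cmod (qq x)"
  by (simp add: phi_int_qq)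

lemma qq_ge: "\<mu> * (gam m h)^(2*m) \<le> cmod (qq x)"
proof -
  have "\<mu> * (gam m h)^(2*m) = Im (qq x)" using mp by (simp add: qq_def Im_Een gam_2m)
  also have "\<dots> \<le> cmod (qq x)" using abs_Im_le_cmod[of "qq x"] by simp
  finally show ?thesis .
qed

lemma qq_le: assumes "\<bar>x\<bar> \<le> 2 * gam m h" shows "cmod (qq x) \<le> KK * (gam m h)^(2*m)"
proof -
  let ?g = "gam m h"
  have "cmod (qq x) \<le> cmod (Een m \<alpha> \<mu> h) + cmod (complex_of_real (x ^ (2*m) / real m))"
    unfolding qq_def by (rule norm_triangle_ineq)
  also have "cmod (Een m \<alpha> \<mu> h) \<le> (\<alpha> + \<mu>) * ?g^(2*m)"
  proof -
    have "cmod (Een m \<alpha> \<mu> h) = cmod (Complex \<alpha> \<mu>) * ?g^(2*m)"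
      using hp by (simp add: Een_def norm_mult gam_2m)
    also have "\<dots> \<le> (\<alpha> + \<mu>) * ?g^(2*m)"
      using cmod_le[of "Complex \<alpha> \<mu>"] ap mp by (intro mult_right_mono) auto
    finally show ?thesis .
  qed
  also have "cmod (complex_of_real (x ^ (2*m) / real m)) \<le> 4^m / real m * ?g^(2*m)"
  proof -
    have "\<bar>x\<bar>^(2*m) \<le> (2 * ?g)^(2*m)" using assms by (intro power_mono) auto
    also have "\<dots> = 4^m * ?g^(2*m)" by (simp add: power_mult_distrib power_mult)
    finally have "\<bar>x\<bar>^(2*m) \<le> 4^m * ?g^(2*m)" .
    moreover have "cmod (complex_of_real (x ^ (2*m) / real m)) = \<bar>x\<bar>^(2*m) / real m"
      by (simp only: norm_of_real abs_divide power_abs abs_of_nat)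
    ultimately show ?thesis using m2 by (simp add: divide_right_mono)
  qed
  finally show ?thesis by (simp add: KK_def algebra_simps)
qed

lemma KK_pos: "KK > 0"
proof -
  have "4^m / real m > (0::real)" using m2 by simp
  then show ?thesis using ap mp by (simp add: KK_def)
qed

lemma gm_sq: "(gam m h)^(2*m) = ((gam m h)^m)^2"
  by (simp add: power_mult[symmetric] mult.commute)

lemma r_ge: "sqrt \<mu> * (gam m h)^m \<le> cmod (phi_int m \<alpha> \<mu> h x)"
proof -
  have "sqrt (\<mu> * (gam m h)^(2*m)) \<le> sqrt (cmod (qq x))" using qq_ge by simp
  moreover have "sqrt (\<mu> * (gam m h)^(2*m)) = sqrt \<mu> * (gam m h)^m"
    using gam_pos by (simp only: gm_sq real_sqrt_mult real_sqrt_abs) simp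
  ultimately show ?thesis by (simp add: phi_int_qq)
qed

lemma r_le: assumes "\<bar>x\<bar> \<le> 2 * gam m h" shows "cmod (phi_int m \<alpha> \<mu> h x) \<le> sqrt KK * (gam m h)^m"
proof -
  have "sqrt (cmod (qq x)) \<le> sqrt (KK * (gam m h)^(2*m))" using qq_le[OF assms] by simp
  moreover have "sqrt (KK * (gam m h)^(2*m)) = sqrt KK * (gam m h)^m"
    using gam_pos by (simp only: gm_sq real_sqrt_mult real_sqrt_abs) simp
  ultimately show ?thesis by (simp add: phi_int_qq)
qed


definition "c1 = 2^(2*m-1) / \<mu>"
definition "c2 = 2^(2*m-2) / \<mu>"
definition "CC B = B * (3/4 * c1^2 + 1/2 * (real (2*m-1) * c2 + c1^2)) + B + 2 * B * (c1/2 + sqrt KK)"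

definition "QQ (ds :: nat \<Rightarrow> real \<Rightarrow> real) x = complex_of_real (ds 0 (x / gam m h)) *
    (3/4 * inverse ((phi_int m \<alpha> \<mu> h x)^2) * (p1 x)^2 - 1/2 * inverse (phi_int m \<alpha> \<mu> h x) * p2 x)
  + complex_of_real (ds 2 (x / gam m h) / (gam m h)^2)
  + 2 * complex_of_real (ds 1 (x / gam m h) / gam m h) * ww x"

lemma QQ_bound:
  assumes x: "\<bar>x\<bar> \<le> 2 * gam m h" and B: "\<forall>s. \<bar>ds 0 s\<bar> \<le> B \<and> \<bar>ds 1 s\<bar> \<le> B \<and> \<bar>ds 2 s\<bar> \<le> (B::real)"
  shows "cmod (QQ ds x) \<le> CC B / (gam m h)^2"
proof -
  let ?P = "phi_int m \<alpha> \<mu> h x" and ?g = "gam m h"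
  define r where "r = cmod ?P"
  define t where "t = \<bar>x\<bar>"
  define A1 where "A1 = t^(2*m-1) / r^2"
  define A2 where "A2 = t^(2*m-2) / r^2"
  define A3 where "A3 = r / h"
  have g: "?g > 0" by (rule gam_pos)
  have rpos: "r > 0" using p_nz[of x] by (simp add: r_def)
  have Bnn: "B \<ge> 0" using B by (meson abs_ge_zero order_trans)
  have r2': "\<mu> * ?g^(2*m) \<le> r^2" using qq_ge[of x] r2[of x] by (simp add: r_def)
  have t0: "0 \<le> t" "t \<le> 2 * ?g" using x by (auto simp: t_def)
  have hA1: "A1 \<le> c1 / ?g"
    using frac_bound[OF t0 g mp r2', of "2*m-1"] m2 by (simp add: A1_def c1_def)
  have hA2: "A2 \<le> c2 / ?g^2"
    using frac_bound[OF t0 g mp r2', of "2*m-2"] m2 by (simp add: A2_def c2_def)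
  have hA3: "A3 \<le> sqrt KK / ?g"
  proof -
    have "r \<le> sqrt KK * ?g^m" using r_le[OF x] by (simp add: r_def)
    then have "r / h \<le> sqrt KK * ?g^m / h" using hp by (simp add: divide_right_mono)
    also have "\<dots> = sqrt KK / ?g"
    proof -
      have hh: "?g^m * ?g = h" by (metis gam_h power_Suc2 Suc_eq_plus1)
      have "sqrt KK * ?g^m / (?g^m * ?g) = sqrt KK / ?g" using g by (simp add: field_simps)
      then show ?thesis by (simp only: hh)
    qed
    finally show ?thesis by (simp add: A3_def)
  qed
  have A1nn: "A1 \<ge> 0" "A2 \<ge> 0" "A3 \<ge> 0" using rpos t0 hp by (auto simp: A1_def A2_def A3_def)
  have cp1: "cmod (p1 x) = t^(2*m-1) / r"
    by (simp add: p1_def norm_divide norm_power r_def t_def power_abs)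
  have n1: "cmod (inverse (?P^2) * (p1 x)^2) = A1^2"
  proof -
    have "cmod (inverse (?P^2) * (p1 x)^2) = (cmod (p1 x))^2 / r^2"
      by (simp only: norm_mult norm_inverse norm_power r_def) (simp add: divide_inverse mult.commute)
    also have "\<dots> = A1^2" using rpos by (simp add: cp1 A1_def power_divide power2_eq_square)
    finally show ?thesis .
  qed
  have n2: "cmod (inverse ?P * p2 x) \<le> real (2*m-1) * A2 + A1^2"
  proof -
    have "inverse ?P * p2 x = complex_of_real (real (2*m-1) * x^(2*m-2)) / ?P^2
        - complex_of_real (x^(2*m-1)) * p1 x / ?P^3"
      using p_nz[of x] by (simp add: p2_def field_simps power2_eq_square power3_eq_cube)
    also have "cmod \<dots> \<le> cmod (complex_of_real (real (2*m-1) * x^(2*m-2)) / ?P^2)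
        + cmod (complex_of_real (x^(2*m-1)) * p1 x / ?P^3)"
      by (rule norm_triangle_ineq4)
    also have "cmod (complex_of_real (real (2*m-1) * x^(2*m-2)) / ?P^2) = real (2*m-1) * A2"
      by (simp add: norm_divide norm_mult norm_power r_def[symmetric] A2_def t_def power_abs)
    also have "cmod (complex_of_real (x^(2*m-1)) * p1 x / ?P^3) = A1^2"
      using rpos by (simp add: norm_divide norm_mult norm_power r_def[symmetric] cp1 A1_def t_def power_abs
          power2_eq_square power3_eq_cube)
    finally show ?thesis .
  qed
  have n3: "cmod (ww x) \<le> A1 / 2 + A3"
  proof -
    have "cmod (ww x) \<le> cmod (- p1 x / (2 * ?P)) + cmod (\<i> * ?P / complex_of_real h)"
      unfolding ww_def by (rule norm_triangle_ineq)
    also have "cmod (- p1 x / (2 * ?P)) = A1 / 2"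
      using rpos by (simp add: norm_divide norm_mult cp1 r_def[symmetric] A1_def power2_eq_square)
    also have "cmod (\<i> * ?P / complex_of_real h) = A3"
      using hp by (simp add: norm_divide norm_mult r_def A3_def)
    finally show ?thesis .
  qed
  define T1 where "T1 = 3/4 * c1^2 + 1/2 * (real (2*m-1) * c2 + c1^2)"
  have c1nn: "c1 \<ge> 0" "c2 \<ge> 0" using mp by (auto simp: c1_def c2_def)
  have sq1: "A1^2 \<le> c1^2 / ?g^2"
    using power_mono[OF hA1 A1nn(1), of 2] by (simp add: power_divide)
  have e1: "cmod (3/4 * inverse (?P^2) * (p1 x)^2 - 1/2 * inverse ?P * p2 x) \<le> T1 / ?g^2"
  proof -
    have "cmod (3/4 * inverse (?P^2) * (p1 x)^2 - 1/2 * inverse ?P * p2 x)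
        \<le> cmod (3/4 * inverse (?P^2) * (p1 x)^2) + cmod (1/2 * inverse ?P * p2 x)"
      by (rule norm_triangle_ineq4)
    also have "cmod (3/4 * inverse (?P^2) * (p1 x)^2) = 3/4 * A1^2"
      using n1 by (simp add: norm_mult mult.assoc)
    also have "cmod (1/2 * inverse ?P * p2 x) = 1/2 * cmod (inverse ?P * p2 x)"
      by (simp add: norm_mult mult.assoc)
    finally have "cmod (3/4 * inverse (?P^2) * (p1 x)^2 - 1/2 * inverse ?P * p2 x)
        \<le> 3/4 * A1^2 + 1/2 * (real (2*m-1) * A2 + A1^2)"
      using mult_left_mono[OF n2, of "1/2"] by linarith
    also have "\<dots> \<le> 3/4 * (c1^2 / ?g^2) + 1/2 * (real (2*m-1) * (c2 / ?g^2) + c1^2 / ?g^2)"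
      using sq1 hA2 by (intro add_mono mult_left_mono) auto
    also have "\<dots> = T1 / ?g^2" using g by (simp add: T1_def field_simps)
    finally show ?thesis .
  qed
  have e3: "cmod (ww x) \<le> (c1/2 + sqrt KK) / ?g"
  proof -
    have "A1 / 2 + A3 \<le> c1 / ?g / 2 + sqrt KK / ?g" using hA1 hA3 by (intro add_mono divide_right_mono) auto
    then show ?thesis using n3 by (simp add: add_divide_distrib)
  qed
  have "cmod (QQ ds x) \<le> \<bar>ds 0 (x / ?g)\<bar> * cmod (3/4 * inverse (?P^2) * (p1 x)^2 - 1/2 * inverse ?P * p2 x)
     + \<bar>ds 2 (x / ?g)\<bar> / ?g^2 + 2 * (\<bar>ds 1 (x / ?g)\<bar> / ?g) * cmod (ww x)"
  proof -
    let ?a = "complex_of_real (ds 0 (x / ?g)) * (3/4 * inverse (?P^2) * (p1 x)^2 - 1/2 * inverse ?P * p2 x)"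
    let ?b = "complex_of_real (ds 2 (x / ?g) / ?g^2)"
    let ?c = "2 * complex_of_real (ds 1 (x / ?g) / ?g) * ww x"
    have "cmod (QQ ds x) \<le> cmod ?a + cmod ?b + cmod ?c"
      unfolding QQ_def by (rule order_trans[OF norm_triangle_ineq add_mono[OF norm_triangle_ineq order_refl]])
    moreover have "cmod ?a = \<bar>ds 0 (x / ?g)\<bar> * cmod (3/4 * inverse (?P^2) * (p1 x)^2 - 1/2 * inverse ?P * p2 x)"
      by (simp only: norm_mult norm_of_real)
    moreover have "cmod ?b = \<bar>ds 2 (x / ?g)\<bar> / ?g^2"
      by (simp only: norm_of_real abs_divide) (simp add: power2_eq_square)
    moreover have "cmod ?c = 2 * (\<bar>ds 1 (x / ?g)\<bar> / ?g) * cmod (ww x)"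
      using g by (simp only: norm_mult norm_of_real abs_divide norm_numeral abs_of_pos)
    ultimately show ?thesis by simp
  qed
  also have "\<dots> \<le> B * (T1 / ?g^2) + B / ?g^2 + 2 * (B / ?g) * ((c1/2 + sqrt KK) / ?g)"
    using B e1 e3 g Bnn by (intro add_mono mult_mono divide_right_mono) auto
  also have "\<dots> = CC B / ?g^2" using g by (simp add: CC_def T1_def field_simps power2_eq_square)
  finally show ?thesis .
qed


lemma RR_eq:
  assumes ds: "\<forall>k x. (ds k has_real_derivative ds (Suc k) x) (at x)" "ds 0 = chi"
  shows "RR chi m \<alpha> \<mu> h x = - complex_of_real (h^2) * uu m \<alpha> \<mu> h x * QQ ds x"
proof -
  have ff: "ff m \<alpha> \<mu> h x = - (complex_of_real (h^2) * (3/4 * inverse ((phi_int m \<alpha> \<mu> h x)^2) * (p1 x)^2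
       - 1/2 * inverse (phi_int m \<alpha> \<mu> h x) * p2 x))"
    by (simp add: ff_def Let_def Dx_phi Dx_p Dx_p1)
  show ?thesis
    unfolding RR_def ff comm_eq[OF ds] ut_def QQ_def ds(2)
    by algebra
qed

lemma QQ_zero:
  assumes ds: "\<forall>k x. (ds k has_real_derivative ds (Suc k) x) (at x)" "ds 0 = chi"
    "closure {s. chi s \<noteq> 0} \<subseteq> {-2..2}"
    and x: "\<bar>x\<bar> > 2 * gam m h"
  shows "QQ ds x = 0"
proof -
  have "\<bar>x / gam m h\<bar> > 2" using x gam_pos by (simp add: divide_simps abs_divide)
  then have "ds k (x / gam m h) = 0" for k using ds_zero[OF ds] by blast
  then show ?thesis by (simp add: QQ_def)
qed

lemma phi_bound:
  assumes x: "\<bar>x\<bar> \<le> 2 * gam m h"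
  shows "cmod (phi m \<alpha> \<mu> h x) \<le> \<bar>x\<bar> * (sqrt KK * (gam m h)^m)"
proof -
  let ?P = "phi_int m \<alpha> \<mu> h" and ?M = "sqrt KK * (gam m h)^m"
  have M: "?M \<ge> 0" using KK_pos gam_pos by simp
  have int: "(?P has_integral integral {c..d} ?P) {c..d}" for c d
    by (rule integrable_integral[OF integrable_continuous_real[OF p_cont]])
  have bnd: "cmod (?P y) \<le> ?M" if "\<bar>y\<bar> \<le> \<bar>x\<bar>" for y
    using r_le[of y] that x by simp
  show ?thesis
  proof (cases "0 \<le> x")
    case True
    have "cmod (integral {0..x} ?P) \<le> ?M * Henstock_Kurzweil_Integration.content (cbox 0 x)"
      by (rule has_integral_bound[OF M]) (use int[of 0 x] bnd True in auto)
    then show ?thesis using True by (simp add: phi_def content_real mult.commute)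
  next
    case False
    have "cmod (integral {x..0} ?P) \<le> ?M * Henstock_Kurzweil_Integration.content (cbox x 0)"
      by (rule has_integral_bound[OF M]) (use int[of x 0] bnd False in auto)
    then show ?thesis using False by (simp add: phi_def content_real mult.commute)
  qed
qed

definition "LL = 2 * sqrt KK"

lemma ee_bounds:
  assumes x: "\<bar>x\<bar> \<le> 2 * gam m h"
  shows "(cmod (ee x))^2 \<le> exp (2 * LL)" "(cmod (ee x))^2 \<ge> exp (- 2 * LL)"
proof -
  let ?z = "phi m \<alpha> \<mu> h x"
  have re: "Re (\<i> * ?z / complex_of_real h) = - Im ?z / h"
    by (simp add: Re_divide_of_real)
  have "\<bar>Im ?z\<bar> \<le> 2 * gam m h * (sqrt KK * (gam m h)^m)"
  proof -
    have M: "sqrt KK * (gam m h)^m \<ge> 0" using KK_pos gam_pos by simp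
    have "\<bar>x\<bar> * (sqrt KK * (gam m h)^m) \<le> 2 * gam m h * (sqrt KK * (gam m h)^m)"
      by (rule mult_right_mono[OF x M])
    then show ?thesis using abs_Im_le_cmod[of ?z] phi_bound[OF x] by linarith
  qed
  also have "\<dots> = LL * h"
  proof -
    have hh: "gam m h * (gam m h)^m = h" by (metis gam_h power_Suc Suc_eq_plus1)
    have "2 * gam m h * (sqrt KK * (gam m h)^m) = 2 * sqrt KK * (gam m h * (gam m h)^m)" by (simp only: ac_simps)
    then show ?thesis by (simp only: hh LL_def)
  qed
  finally have "\<bar>Im ?z\<bar> / h \<le> LL" using hp by (simp add: divide_simps mult.commute)
  then have b: "\<bar>Re (\<i> * ?z / complex_of_real h)\<bar> \<le> LL" by (simp add: re abs_divide abs_of_pos[OF hp])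
  have sq: "(cmod (ee x))^2 = exp (2 * Re (\<i> * ?z / complex_of_real h))"
    by (simp add: ee_def power2_eq_square exp_add[symmetric])
  have w1: "2 * Re (\<i> * ?z / complex_of_real h) \<le> 2 * LL" using b by linarith
  have w2: "- 2 * LL \<le> 2 * Re (\<i> * ?z / complex_of_real h)" using b by linarith
  show "(cmod (ee x))^2 \<le> exp (2 * LL)" unfolding sq using w1 by (simp only: exp_le_cancel_iff)
  show "(cmod (ee x))^2 \<ge> exp (- 2 * LL)" unfolding sq using w2 by (simp only: exp_le_cancel_iff)
qed

lemma uu_sq: "(cmod (uu m \<alpha> \<mu> h x))^2 = (cmod (ee x))^2 / cmod (phi_int m \<alpha> \<mu> h x)"
proof -
  let ?r = "cmod (phi_int m \<alpha> \<mu> h x)"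
  have r: "?r > 0" using p_nz by simp
  have "cmod (phi_int m \<alpha> \<mu> h x powr (-1/2)) = ?r powr (-1/2)"
    by (subst norm_powr_real_powr') auto
  then have "(cmod (uu m \<alpha> \<mu> h x))^2 = (?r powr (-1/2))^2 * (cmod (ee x))^2"
    by (simp add: uu_eq norm_mult power_mult_distrib)
  also have "(?r powr (-1/2))^2 = ?r powr (-1)"
    using r by (simp add: powr_power)
  also have "\<dots> = 1 / ?r" using r by (simp add: powr_minus_divide)
  finally show ?thesis by simp
qed

definition "U1 = exp (2 * LL) / sqrt \<mu>"
definition "U0 = exp (- 2 * LL) / sqrt KK"

lemma uu_upper: assumes "\<bar>x\<bar> \<le> 2 * gam m h"
  shows "(cmod (uu m \<alpha> \<mu> h x))^2 \<le> U1 / (gam m h)^m"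
proof -
  let ?r = "cmod (phi_int m \<alpha> \<mu> h x)"
  have "sqrt \<mu> * (gam m h)^m > 0" using mp gam_pos by simp
  then have "(cmod (ee x))^2 / ?r \<le> exp (2 * LL) / (sqrt \<mu> * (gam m h)^m)"
    using ee_bounds(1)[OF assms] r_ge[of x] by (intro frac_le) auto
  then show ?thesis by (simp add: uu_sq U1_def)
qed

lemma uu_lower: assumes "\<bar>x\<bar> \<le> gam m h"
  shows "(cmod (uu m \<alpha> \<mu> h x))^2 \<ge> U0 / (gam m h)^m"
proof -
  let ?r = "cmod (phi_int m \<alpha> \<mu> h x)"
  have x2: "\<bar>x\<bar> \<le> 2 * gam m h" using assms gam_pos by simp
  have r: "?r > 0" using p_nz by simp
  have "exp (- 2 * LL) / (sqrt KK * (gam m h)^m) \<le> (cmod (ee x))^2 / ?r"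
    using ee_bounds(2)[OF x2] r_le[OF x2] r by (intro frac_le) auto
  then show ?thesis by (simp add: uu_sq U0_def)
qed


lemma CC_nonneg: "B \<ge> 0 \<Longrightarrow> CC B \<ge> 0"
  unfolding CC_def c1_def c2_def using mp KK_pos
  by (intro add_nonneg_nonneg mult_nonneg_nonneg) auto

lemma RR_bound:
  assumes ds: "\<forall>k x. (ds k has_real_derivative ds (Suc k) x) (at x)" "ds 0 = chi"
    "closure {s. chi s \<noteq> 0} \<subseteq> {-2..2}"
    and B: "\<forall>s. \<bar>ds 0 s\<bar> \<le> B \<and> \<bar>ds 1 s\<bar> \<le> B \<and> \<bar>ds 2 s\<bar> \<le> (B::real)"
  shows "(cmod (RR chi m \<alpha> \<mu> h x))^2 \<le> indicator {-2 * gam m h .. 2 * gam m h} x *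
      ((CC B * (gam m h)^(2*m))^2 * (U1 / (gam m h)^m))"
proof (cases "\<bar>x\<bar> \<le> 2 * gam m h")
  case True
  let ?g = "gam m h"
  have g: "?g > 0" by (rule gam_pos)
  have "B \<ge> 0" using B by (meson abs_ge_zero order_trans)
  then have CCnn: "CC B \<ge> 0" by (rule CC_nonneg)
  have hh: "h^2 / ?g^2 = ?g^(2*m)"
  proof -
    have "h^2 = (?g^(m+1))^2" using gam_h by simp
    also have "\<dots> = ?g^(2*m) * ?g^2" by (simp add: power_mult[symmetric] power_add[symmetric] algebra_simps)
    finally show ?thesis using g by simp
  qed
  have "cmod (RR chi m \<alpha> \<mu> h x) = h^2 * cmod (uu m \<alpha> \<mu> h x) * cmod (QQ ds x)"
    unfolding RR_eq[OF ds(1,2)] by (simp add: norm_mult norm_power)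
  also have "\<dots> \<le> h^2 * cmod (uu m \<alpha> \<mu> h x) * (CC B / ?g^2)"
    by (intro mult_left_mono QQ_bound[OF True B]) auto
  also have "\<dots> = CC B * (h^2 / ?g^2) * cmod (uu m \<alpha> \<mu> h x)"
    by (simp add: field_simps)
  also have "\<dots> = CC B * ?g^(2*m) * cmod (uu m \<alpha> \<mu> h x)"
    by (simp only: hh)
  finally have "(cmod (RR chi m \<alpha> \<mu> h x))^2 \<le> (CC B * ?g^(2*m) * cmod (uu m \<alpha> \<mu> h x))^2"
    by (intro power_mono) auto
  also have "\<dots> = (CC B * ?g^(2*m))^2 * (cmod (uu m \<alpha> \<mu> h x))^2" by (simp add: power_mult_distrib)
  also have "\<dots> \<le> (CC B * ?g^(2*m))^2 * (U1 / ?g^m)"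
    by (intro mult_left_mono uu_upper[OF True]) auto
  finally show ?thesis using True by (simp add: indicator_def abs_le_iff)
next
  case False
  then have "x \<notin> {-2 * gam m h .. 2 * gam m h}" by (auto simp: abs_le_iff)
  then show ?thesis using QQ_zero[OF ds False[unfolded not_le]] RR_eq[OF ds(1,2), of x]
    by simp
qed


lemma final_h:
  assumes ds: "\<forall>k x. (ds k has_real_derivative ds (Suc k) x) (at x)" "ds 0 = chi"
    "closure {s. chi s \<noteq> 0} \<subseteq> {-2..2}"
    and chi1: "\<forall>s. \<bar>s\<bar> \<le> 1 \<longrightarrow> chi s = 1"
    and B: "\<forall>s. \<bar>ds 0 s\<bar> \<le> B \<and> \<bar>ds 1 s\<bar> \<le> B \<and> \<bar>ds 2 s\<bar> \<le> (B::real)"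
  shows "L2norm (RR chi m \<alpha> \<mu> h) \<le> (CC B * sqrt (2 * U1 / U0)) * h powr (2 * real m / (real m + 1))
      * L2norm (ut chi m \<alpha> \<mu> h)"
proof -
  let ?g = "gam m h"
  have g: "?g > 0" by (rule gam_pos)
  have Bnn: "B \<ge> 0" using B by (meson abs_ge_zero order_trans)
  have U0: "U0 > 0" using KK_pos by (simp add: U0_def)
  have U1: "U1 > 0" using mp by (simp add: U1_def)
  define D where "D = (CC B * ?g^(2*m))^2 * (U1 / ?g^m)"
  have Dnn: "D \<ge> 0" using U1 g by (simp add: D_def)
  have IR: "(\<integral>x. (cmod (RR chi m \<alpha> \<mu> h x))^2 \<partial>lborel) \<le> 4 * ?g * D"
  proof (cases "integrable lborel (\<lambda>x. (cmod (RR chi m \<alpha> \<mu> h x))^2)")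
    case True
    have "(\<integral>x. (cmod (RR chi m \<alpha> \<mu> h x))^2 \<partial>lborel)
        \<le> (\<integral>x. indicator {-2 * ?g .. 2 * ?g} x * D \<partial>lborel)"
      by (rule integral_mono[OF True]) (use RR_bound[OF ds B] g in \<open>auto simp: D_def\<close>)
    also have "\<dots> = 4 * ?g * D" using g by simp
    finally show ?thesis .
  next
    case False
    then show ?thesis using Dnn g by (simp add: not_integrable_integral_eq)
  qed
  have cu: "isCont (ut chi m \<alpha> \<mu> h) x" for x
  proof -
    have "isCont (\<lambda>x. complex_of_real (ds 0 (x / ?g))) x"
      using ds_deriv[OF ds(1), of ?g 0 x] g has_vector_derivative_continuous by force
    moreover have "isCont (uu m \<alpha> \<mu> h) x" using uu_deriv has_vector_derivative_continuous by blast
    ultimately have "isCont (\<lambda>x. complex_of_real (ds 0 (x / ?g)) * uu m \<alpha> \<mu> h x) x"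
      by (rule isCont_mult)
    moreover have "ut chi m \<alpha> \<mu> h = (\<lambda>x. complex_of_real (ds 0 (x / ?g)) * uu m \<alpha> \<mu> h x)"
      using ds(2) by (simp add: ut_def[abs_def])
    ultimately show ?thesis by simp
  qed
  have meas: "(\<lambda>x. (cmod (ut chi m \<alpha> \<mu> h x))^2) \<in> borel_measurable lborel"
  proof -
    have "continuous_on UNIV (\<lambda>x. (cmod (ut chi m \<alpha> \<mu> h x))^2)"
      by (intro continuous_at_imp_continuous_on ballI continuous_intros cu)
    then show ?thesis using borel_measurable_continuous_onI by simp
  qed
  have intb: "integrable lborel (\<lambda>x. indicator {a..b} x * c)" if "a \<le> b" for a b c :: real
    using that by (simp add: integrable_indicator_iff)
  have utint: "integrable lborel (\<lambda>x. (cmod (ut chi m \<alpha> \<mu> h x))^2)"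
  proof (rule Bochner_Integration.integrable_bound[OF intb meas])
    show "-2 * ?g \<le> 2 * ?g" using g by simp
    show "AE x in lborel. norm ((cmod (ut chi m \<alpha> \<mu> h x))^2)
        \<le> norm (indicator {-2 * ?g .. 2 * ?g} x * (B^2 * (U1 / ?g^m)))"
    proof (rule AE_I2)
      fix x
      show "norm ((cmod (ut chi m \<alpha> \<mu> h x))^2) \<le> norm (indicator {-2 * ?g .. 2 * ?g} x * (B^2 * (U1 / ?g^m)))"
      proof (cases "\<bar>x\<bar> \<le> 2 * ?g")
        case True
        have "(cmod (ut chi m \<alpha> \<mu> h x))^2 = (ds 0 (x / ?g))^2 * (cmod (uu m \<alpha> \<mu> h x))^2"
          using ds(2) by (simp add: ut_def norm_mult power_mult_distrib)
        also have "\<dots> \<le> B^2 * (U1 / ?g^m)"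
        proof (rule mult_mono)
          show "(ds 0 (x / ?g))^2 \<le> B^2" using B by (metis abs_le_square_iff abs_of_nonneg Bnn)
        qed (use uu_upper[OF True] Bnn in auto)
        finally show ?thesis using True U1 g by (simp add: indicator_def abs_le_iff)
      next
        case False
        then have "\<bar>x / ?g\<bar> > 2" using g by (simp add: divide_simps abs_divide)
        then have "chi (x / ?g) = 0" using ds_zero[OF ds, of "x / ?g" 0] ds(2) by simp
        then show ?thesis by (simp add: ut_def)
      qed
    qed
  qed
  have Iu: "2 * ?g * (U0 / ?g^m) \<le> (\<integral>x. (cmod (ut chi m \<alpha> \<mu> h x))^2 \<partial>lborel)"
  proof -
    have "2 * ?g * (U0 / ?g^m) = (\<integral>x. indicator {- ?g .. ?g} x * (U0 / ?g^m) \<partial>lborel)"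
      using g by simp
    also have "\<dots> \<le> (\<integral>x. (cmod (ut chi m \<alpha> \<mu> h x))^2 \<partial>lborel)"
    proof (rule integral_mono[OF intb utint])
      show "- ?g \<le> ?g" using g by simp
      fix x
      show "indicator {- ?g .. ?g} x * (U0 / ?g^m) \<le> (cmod (ut chi m \<alpha> \<mu> h x))^2"
      proof (cases "\<bar>x\<bar> \<le> ?g")
        case True
        then have "\<bar>x / ?g\<bar> \<le> 1" using g by (simp add: divide_simps abs_divide)
        then have "chi (x / ?g) = 1" using chi1 by blast
        then have "(cmod (ut chi m \<alpha> \<mu> h x))^2 = (cmod (uu m \<alpha> \<mu> h x))^2" by (simp add: ut_def)
        then show ?thesis using uu_lower[OF True] True by (simp add: indicator_def abs_le_iff)
      next
        case False
        then have "x \<notin> {- ?g .. ?g}" by (auto simp: abs_le_iff)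
        then show ?thesis by simp
      qed
    qed
    finally show ?thesis .
  qed
  have CCnn: "CC B \<ge> 0" by (rule CC_nonneg[OF Bnn])
  have Ann: "CC B * ?g^(2*m) * sqrt (2 * U1 / U0) \<ge> 0" using CCnn g U0 U1 by (intro mult_nonneg_nonneg) auto
  have "L2norm (RR chi m \<alpha> \<mu> h) \<le> sqrt (4 * ?g * D)"
    unfolding L2norm_def using IR by simp
  also have "4 * ?g * D = (CC B * ?g^(2*m) * sqrt (2 * U1 / U0))^2 * (2 * ?g * (U0 / ?g^m))"
  proof -
    have "(sqrt (2 * U1 / U0))^2 = 2 * U1 / U0" using U0 U1 by simp
    then show ?thesis using U0 g by (simp add: D_def power_mult_distrib field_simps)
  qed
  also have "sqrt \<dots> = CC B * ?g^(2*m) * sqrt (2 * U1 / U0) * sqrt (2 * ?g * (U0 / ?g^m))"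
  proof -
    have "CC B * ?g^(2*m) * sqrt (2 * U1 / U0) \<ge> 0" using CCnn g U0 U1 by (intro mult_nonneg_nonneg) auto
    then show ?thesis by (simp only: real_sqrt_mult real_sqrt_abs abs_of_nonneg)
  qed
  also have "\<dots> \<le> CC B * ?g^(2*m) * sqrt (2 * U1 / U0) * L2norm (ut chi m \<alpha> \<mu> h)"
    unfolding L2norm_def using Iu Ann by (intro mult_left_mono) auto
  finally have "L2norm (RR chi m \<alpha> \<mu> h) \<le> CC B * ?g^(2*m) * sqrt (2 * U1 / U0) * L2norm (ut chi m \<alpha> \<mu> h)" .
  then have "L2norm (RR chi m \<alpha> \<mu> h) \<le> CC B * h powr (2 * real m / (real m + 1)) * sqrt (2 * U1 / U0) * L2norm (ut chi m \<alpha> \<mu> h)"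
    by (simp only: gam_2m)
  then show ?thesis by (simp only: ac_simps)
qed


lemma CC_pos: "B > 0 \<Longrightarrow> CC B > 0"
proof -
  assume B: "B > 0"
  have "B * (3/4 * c1^2 + 1/2 * (real (2*m-1) * c2 + c1^2)) \<ge> 0" "2 * B * (c1/2 + sqrt KK) \<ge> 0"
    unfolding c1_def c2_def using mp KK_pos B by (intro mult_nonneg_nonneg add_nonneg_nonneg; simp)+
  then show ?thesis using B unfolding CC_def by linarith
qed

lemma ratio_pos: "sqrt (2 * U1 / U0) > 0"
  using KK_pos mp by (simp add: U0_def U1_def)

end

theorem lemma5p2:
  fixes m :: nat and \<alpha> \<mu> :: real and chi :: "real \<Rightarrow> real"
  assumes "m \<ge> 2" and "\<alpha> > 0" and "\<mu> > 0" and "cutoff chi"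
  shows "\<exists>C>0. \<forall>h. 0 < h \<and> h \<le> 1 \<longrightarrow>
           L2norm (RR chi m \<alpha> \<mu> h) \<le> C * h powr (2 * real m / (real m + 1)) * L2norm (ut chi m \<alpha> \<mu> h)"
proof -
  from assms(4) obtain ds where ds0: "ds 0 = chi" and dsd: "\<forall>k x. (ds k has_real_derivative ds (Suc k) x) (at x)"
    and chi1: "\<forall>s. \<bar>s\<bar> \<le> 1 \<longrightarrow> chi s = 1" and clos: "closure {s. chi s \<noteq> 0} \<subseteq> {-2..2}"
    unfolding cutoff_def smooth_real_def by blast
  obtain B where B0: "B > 0" and Bb: "\<forall>s. \<bar>ds 0 s\<bar> \<le> B \<and> \<bar>ds 1 s\<bar> \<le> B \<and> \<bar>ds 2 s\<bar> \<le> B"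
    using ds_bound3[OF dsd ds0 clos] by blast
  define C where "C = CC m \<alpha> \<mu> B * sqrt (2 * U1 m \<alpha> \<mu> / U0 m \<alpha> \<mu>)"
  have one: "(1::real) > 0" by simp
  show ?thesis
  proof (intro exI[of _ C] conjI allI impI)
    show "C > 0" unfolding C_def
      using CC_pos[OF assms(1,2,3) one B0] ratio_pos[OF assms(1,2,3) one] by simp
    fix h :: real assume h: "0 < h \<and> h \<le> 1"
    show "L2norm (RR chi m \<alpha> \<mu> h) \<le> C * h powr (2 * real m / (real m + 1)) * L2norm (ut chi m \<alpha> \<mu> h)"
      unfolding C_def using final_h[OF assms(1,2,3) conjunct1[OF h] dsd ds0 clos chi1 Bb] .
  qed
qed

end
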